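(* Let $m_1 > m_2 > \dots > m_k$ be a hierarchy of measures as in the context, and let $0 \le s < e \le 1440$ with $T = e - s$. Then the Timehash index key set $H(s,e)$ satisfies $$|H(s,e)| \le \left\lfloor \frac{T}{m_1} \right\rfloor + 1 + B, \qquad B = 2\sum_{i=2}^{k}\left(\frac{m_{i-1}}{m_i} - 1\right),$$ where $B$ depends only on the hierarchy; in particular $|H(s,e)| = O(T/m_1)$. For the hierarchy $(m_1,\dots,m_5) = (240,60,15,5,1)$ one has $B = 24$.
   Context: Time of day is measured in minutes since midnight, $\{0,1,\dots,1439\}$. A hierarchy of measures is a sequence of positive integers $m_1 > m_2 > \dots > m_k$ with $m_k = 1$, $m_i$ dividing $m_{i-1}$ for $2 \le i \le k$, and $m_1$ dividing $1440$. A level-$i$ block is a set of minutes $[a, a+m_i) = \{a, \dots, a+m_i-1\}$ with $a$ a nonnegative multiple of $m_i$ and $a + m_i \le 1440$; its key is the pair $(i,a)$. Every level-$i$ block with $i \ge 2$ is contained in a unique level-$(i-1)$ block, its parent. For a range $0 \le s < e \le 1440$ (the minutes $s,\dots,e-1$), the index key set $H(s,e)$ is the set of keys of all blocks $B$ (at any level) such that $B \subseteq [s,e)$ and either $B$ is at level 1 or the parent of $B$ is not contained in $[s,e)$ (the decomposition into complete coarsest blocks inside the range, with partially covered boundary blocks recursively refined at finer levels). *)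

theory Defs
  imports Main
begin

text \<open>A hierarchy of measures m_1 > ... > m_k is a list ms = [m_1,...,m_k];
  level i (1-based) has measure ms ! (i - 1).\<close>

definition meas :: "nat list \<Rightarrow> nat \<Rightarrow> nat" where
  "meas ms i = ms ! (i - 1)"

definition hierarchy :: "nat list \<Rightarrow> bool" where
  "hierarchy ms \<longleftrightarrow> ms \<noteq> [] \<and> (\<forall>i\<in>{1..length ms}. 0 < meas ms i)
     \<and> (\<forall>i\<in>{2..length ms}. meas ms i < meas ms (i - 1) \<and> meas ms i dvd meas ms (i - 1))
     \<and> meas ms (length ms) = 1 \<and> meas ms 1 dvd 1440"

definition is_block :: "nat list \<Rightarrow> nat \<Rightarrow> nat \<Rightarrow> bool" where
  "is_block ms i a \<longleftrightarrow> 1 \<le> i \<and> i \<le> length ms \<and> meas ms i dvd a \<and> a + meas ms i \<le> 1440"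

definition block :: "nat list \<Rightarrow> nat \<Rightarrow> nat \<Rightarrow> nat set" where
  "block ms i a = {a..<a + meas ms i}"

definition parent_start :: "nat list \<Rightarrow> nat \<Rightarrow> nat \<Rightarrow> nat" where
  "parent_start ms i a = a - a mod meas ms (i - 1)"

definition H :: "nat list \<Rightarrow> nat \<Rightarrow> nat \<Rightarrow> (nat \<times> nat) set" where
  "H ms s e = {(i, a). is_block ms i a \<and> block ms i a \<subseteq> {s..<e}
      \<and> (i = 1 \<or> \<not> block ms (i - 1) (parent_start ms i a) \<subseteq> {s..<e})}"

text \<open>B = 2 * sum_{i=2}^k (m_{i-1}/m_i - 1); the quotients are exact by divisibility.\<close>
definition Bconst :: "nat list \<Rightarrow> nat" where
  "Bconst ms = 2 * (\<Sum>i = 2..length ms. meas ms (i - 1) div meas ms i - 1)"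

end

theory Submission imports Defs begin
lemma Bex: "Bconst [240, 60, 15, 5, 1] = 24"
  proof -
  have e: "{2..5::nat} = {2,3,4,5}" by auto
  show ?thesis by (simp add: Bconst_def meas_def e)
qed

lemma all_card:
  fixes m M p :: nat
  assumes "0 < m" "m dvd M" "m dvd p"
  shows "card {a. m dvd a \<and> p \<le> a \<and> a < p + M} = M div m"
proof -
  have "{a. m dvd a \<and> p \<le> a \<and> a < p + M} = (\<lambda>j. p + j * m) ` {..<M div m}"
  proof (rule set_eqI, rule iffI)
    fix a assume "a \<in> {a. m dvd a \<and> p \<le> a \<and> a < p + M}"
    hence a: "m dvd a" "p \<le> a" "a < p + M" by auto
    have d: "m dvd (a - p)" using a assms by (simp add: dvd_diff_nat)
    then obtain j where j: "a - p = j * m" by (metis dvd_def mult.commute)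
    have "j * m < M" using a j by linarith
    hence "j < M div m" using assms
      by (metis dvd_mult_div_cancel mult.commute mult_less_cancel2)
    thus "a \<in> (\<lambda>j. p + j * m) ` {..<M div m}" using j a by force
  next
    fix a assume "a \<in> (\<lambda>j. p + j * m) ` {..<M div m}"
    then obtain j where j: "j < M div m" "a = p + j * m" by auto
    have "j * m < M" using j assms
      by (metis dvd_mult_div_cancel mult.commute mult_less_cancel2)
    thus "a \<in> {a. m dvd a \<and> p \<le> a \<and> a < p + M}" using j assms by auto
  qed
  moreover have "inj_on (\<lambda>j. p + j * m) {..<M div m}" using assms by (auto simp: inj_on_def)
  ultimately show ?thesis by (simp add: card_image)
qed

definition SS :: "nat \<Rightarrow> nat \<Rightarrow> nat \<Rightarrow> nat \<Rightarrow> nat \<Rightarrow> nat set" where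
  "SS m M p s e = {a. m dvd a \<and> p \<le> a \<and> a < p + M \<and> s \<le> a \<and> a + m \<le> e}"

lemma SS_card:
  fixes m M p :: nat
  assumes "0 < m" "m dvd M" "m dvd p" "\<not> {p..<p+M} \<subseteq> {s..<e}"
  shows "card (SS m M p s e) \<le> M div m - 1"
proof -
  let ?A = "{a. m dvd a \<and> p \<le> a \<and> a < p + M}"
  obtain x where x: "p \<le> x" "x < p + M" "x < s \<or> e \<le> x"
  proof -
    from assms(4) obtain x where "x \<in> {p..<p+M}" "x \<notin> {s..<e}" by blast
    then show ?thesis by (intro that) auto
  qed
  define c where "c = x - x mod m"
  have c1: "m dvd c" unfolding c_def by (simp add: minus_mod_eq_mult_div)
  have "c = m * (x div m)" unfolding c_def by (simp add: minus_mod_eq_mult_div)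
  have "p \<le> c"
  proof -
    obtain q where q: "p = m * q" using assms(3) by auto
    have "q \<le> x div m" using x q assms(1) by (metis div_le_mono nonzero_mult_div_cancel_left not_gr0)
    thus ?thesis using q \<open>c = m * (x div m)\<close> by simp
  qed
  have "c \<le> x" unfolding c_def by simp
  have "x < c + m"
  proof -
    have "x mod m < m" using assms(1) by simp
    moreover have "x mod m \<le> x" by simp
    ultimately show ?thesis unfolding c_def by linarith
  qed
  have cA: "c \<in> ?A" using c1 \<open>p \<le> c\<close> \<open>c \<le> x\<close> x by auto
  have cS: "c \<notin> SS m M p s e" using x \<open>c \<le> x\<close> \<open>x < c + m\<close> unfolding SS_def by auto
  have sub: "SS m M p s e \<subset> ?A" using cA cS unfolding SS_def by auto
  have "finite ?A" by (rule finite_subset[of _ "{p..<p+M}"]) auto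
  hence "card (SS m M p s e) < card ?A" using sub psubset_card_mono by blast
  thus ?thesis using all_card[OF assms(1-3)] by simp
qed

lemma same_parent:
  fixes M x y :: nat
  assumes "0 < M" "x - x mod M \<le> y" "y < x - x mod M + M"
  shows "y - y mod M = x - x mod M"
proof -
  have hx: "x - x mod M = M * (x div M)" by (simp add: minus_mod_eq_mult_div)
  have "y div M = x div M" using assms hx by (simp add: div_nat_eqI)
  thus ?thesis using hx by (simp add: minus_mod_eq_mult_div)
qed

lemma A1_card:
  fixes m s e :: nat
  assumes "0 < m"
  shows "card {a. m dvd a \<and> s \<le> a \<and> a + m \<le> e} \<le> (e - s) div m"
proof -
  let ?A = "{a. m dvd a \<and> s \<le> a \<and> a + m \<le> e}"
  let ?f = "\<lambda>a. (a - s) div m"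
  have inj: "inj_on ?f ?A"
  proof (rule inj_onI)
    have key: "?f a < ?f b" if "a \<in> ?A" "b \<in> ?A" "a < b" for a b
    proof -
      have "m dvd b - a" using that by (simp add: dvd_diff_nat)
      then obtain t where t: "b - a = m * t" by auto
      have "t \<noteq> 0"
      proof
        assume "t = 0" hence "b - a = 0" using t by simp
        thus False using that by simp
      qed
      hence "m * t \<ge> m" by simp
      hence "b \<ge> a + m" using t that by linarith
      hence "(b - s) div m \<ge> (a - s + m) div m" using that by (intro div_le_mono) auto
      moreover have "(a - s + m) div m = (a - s) div m + 1" using assms by (simp add: div_add_self2)
      ultimately show ?thesis by simp
    qed
    fix a b assume ab: "a \<in> ?A" "b \<in> ?A" "?f a = ?f b"
    show "a = b"
    proof (rule ccontr)
      assume "a \<noteq> b"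
      hence "a < b \<or> b < a" by arith
      thus False using key[of a b] key[of b a] ab by auto
    qed
  qed
  have "?f ` ?A \<subseteq> {..<(e - s) div m}"
  proof
    fix y assume "y \<in> ?f ` ?A"
    then obtain a where a: "a \<in> ?A" "y = ?f a" by auto
    have "(a - s + m) div m \<le> (e - s) div m" using a by (intro div_le_mono) auto
    moreover have "(a - s + m) div m = (a - s) div m + 1" using assms by (simp add: div_add_self2)
    ultimately show "y \<in> {..<(e - s) div m}" using a by simp
  qed
  hence "card (?f ` ?A) \<le> (e - s) div m" by (metis card_lessThan card_mono finite_lessThan)
  thus ?thesis using card_image[OF inj] by simp
qed

definition CC :: "nat \<Rightarrow> nat \<Rightarrow> nat \<Rightarrow> nat \<Rightarrow> nat \<Rightarrow> nat set" where
  "CC m M p s e = (if {p..<p+M} \<subseteq> {s..<e} then {} else SS m M p s e)"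

lemma CC_card:
  assumes "0 < m" "m dvd M" "m dvd p"
  shows "card (CC m M p s e) \<le> M div m - 1"
  using SS_card[OF assms] unfolding CC_def by auto

lemma CC_fin: "finite (CC m M p s e)"
  unfolding CC_def SS_def by (auto intro: finite_subset[of _ "{p..<p+M}"])

theorem mainTheorem3:
  fixes ms :: "nat list" and s e :: nat
  assumes "hierarchy ms" and "s < e" and "e \<le> 1440"
  shows "card (H ms s e) \<le> (e - s) div meas ms 1 + 1 + Bconst ms
         \<and> Bconst [240, 60, 15, 5, 1] = 24"
proof -
  let ?k = "length ms"
  let ?m = "meas ms"
  have pos: "\<And>i. 1 \<le> i \<Longrightarrow> i \<le> ?k \<Longrightarrow> 0 < ?m i" using assms(1) unfolding hierarchy_def by auto
  have dv: "\<And>i. 2 \<le> i \<Longrightarrow> i \<le> ?k \<Longrightarrow> ?m i dvd ?m (i - 1)" using assms(1) unfolding hierarchy_def by auto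
  have k1: "1 \<le> ?k" using assms(1) unfolding hierarchy_def by (cases ms) auto
  define A1 where "A1 = {a. ?m 1 dvd a \<and> s \<le> a \<and> a + ?m 1 \<le> e}"
  define ps where "ps i = s - s mod ?m (i - 1)" for i
  define pe where "pe i = (e - 1) - (e - 1) mod ?m (i - 1)" for i
  define D where "D i = CC (?m i) (?m (i - 1)) (ps i) s e \<union> CC (?m i) (?m (i - 1)) (pe i) s e" for i
  have sub: "H ms s e \<subseteq> ({1::nat} \<times> A1) \<union> (\<Union>i\<in>{2..?k}. {i} \<times> D i)"
  proof
    fix x assume xH: "x \<in> H ms s e"
    obtain i a where x: "x = (i, a)" by (cases x)
    have hb: "is_block ms i a" and hs: "block ms i a \<subseteq> {s..<e}"
      and hp: "i = 1 \<or> \<not> block ms (i - 1) (parent_start ms i a) \<subseteq> {s..<e}"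
      using xH x unfolding H_def by auto
    have i1: "1 \<le> i" "i \<le> ?k" "?m i dvd a" using hb unfolding is_block_def by auto
    have mi: "0 < ?m i" using pos i1 by auto
    have "a \<in> block ms i a" using mi unfolding block_def by auto
    hence sa: "s \<le> a" using hs by auto
    have "a + ?m i - 1 \<in> block ms i a" using mi unfolding block_def by auto
    hence "a + ?m i - 1 < e" using hs by auto
    hence ae: "a + ?m i \<le> e" using mi by linarith
    show "x \<in> ({1::nat} \<times> A1) \<union> (\<Union>i\<in>{2..?k}. {i} \<times> D i)"
    proof (cases "i = 1")
      case True
      thus ?thesis using x i1 sa ae unfolding A1_def by auto
    next
      case False
      hence i2: "2 \<le> i" using i1 by auto
      let ?M = "?m (i - 1)"
      define p where "p = a - a mod ?M"
      have M0: "0 < ?M" using pos i2 i1 by auto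
      have np: "\<not> {p..<p + ?M} \<subseteq> {s..<e}" using hp False
        unfolding block_def parent_start_def p_def by auto
      have pa: "p \<le> a" unfolding p_def by simp
      have ap: "a < p + ?M"
      proof -
        have "a mod ?M < ?M" using M0 by simp
        moreover have "a mod ?M \<le> a" by simp
        ultimately show ?thesis unfolding p_def by linarith
      qed
      have aS: "a \<in> SS (?m i) ?M p s e" unfolding SS_def using i1 pa ap sa ae by auto
      obtain y where y: "p \<le> y" "y < p + ?M" "y < s \<or> e \<le> y"
      proof -
        from np obtain y where "y \<in> {p..<p+?M}" "y \<notin> {s..<e}" by blast
        then show ?thesis by (intro that) auto
      qed
      have "p = ps i \<or> p = pe i"
      proof (cases "y < s")
        case True
        have "s - s mod ?M = p" using same_parent[OF M0, of a s] True y sa ap unfolding p_def by linarith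
        thus ?thesis unfolding ps_def by simp
      next
        case False
        hence "e \<le> y" using y by simp
        have "p \<le> e - 1" using pa ae mi by linarith
        moreover have "e - 1 < p + ?M" using \<open>e \<le> y\<close> y assms(2) by linarith
        ultimately have "(e - 1) - (e - 1) mod ?M = p" using same_parent[OF M0, of a "e - 1"] unfolding p_def by linarith
        thus ?thesis unfolding pe_def by simp
      qed
      hence "a \<in> D i" using aS np unfolding D_def CC_def by auto
      thus ?thesis using x i2 i1 by auto
    qed
  qed
  have finA: "finite A1" unfolding A1_def by (rule finite_subset[of _ "{..e}"]) auto
  have finD: "\<And>i. finite (D i)" unfolding D_def using CC_fin by auto
  have "card (H ms s e) \<le> card (({1::nat} \<times> A1) \<union> (\<Union>i\<in>{2..?k}. {i} \<times> D i))"
    using sub finA finD by (intro card_mono) auto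
  also have "\<dots> \<le> card ({1::nat} \<times> A1) + card (\<Union>i\<in>{2..?k}. {i} \<times> D i)" using card_Un_le by blast
  also have "card ({1::nat} \<times> A1) = card A1" by (simp add: card_cartesian_product_singleton)
  also have "card A1 \<le> (e - s) div ?m 1" unfolding A1_def using pos k1 by (intro A1_card) auto
  also have "card (\<Union>i\<in>{2..?k}. {i} \<times> D i) \<le> (\<Sum>i\<in>{2..?k}. card ({i} \<times> D i))" by (rule card_UN_le) simp
  also have "\<dots> \<le> (\<Sum>i\<in>{2..?k}. 2 * (?m (i - 1) div ?m i - 1))"
  proof (rule sum_mono)
    fix i assume "i \<in> {2..?k}"
    hence i: "2 \<le> i" "i \<le> ?k" by auto
    have mi: "0 < ?m i" using pos i by auto
    have d: "?m i dvd ?m (i - 1)" using dv i by auto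
    have "?m i dvd ps i" unfolding ps_def using d
      by (metis dvd_mult2 minus_mod_eq_mult_div)
    moreover have "?m i dvd pe i" unfolding pe_def using d
      by (metis dvd_mult2 minus_mod_eq_mult_div)
    ultimately have "card (CC (?m i) (?m (i - 1)) (ps i) s e) \<le> ?m (i - 1) div ?m i - 1"
      "card (CC (?m i) (?m (i - 1)) (pe i) s e) \<le> ?m (i - 1) div ?m i - 1"
      using CC_card[OF mi d] by auto
    hence "card (D i) \<le> 2 * (?m (i - 1) div ?m i - 1)" unfolding D_def
      using card_Un_le[of "CC (?m i) (?m (i - 1)) (ps i) s e" "CC (?m i) (?m (i - 1)) (pe i) s e"] by linarith
    thus "card ({i} \<times> D i) \<le> 2 * (?m (i - 1) div ?m i - 1)" by (simp add: card_cartesian_product_singleton)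
  qed
  also have "\<dots> = Bconst ms" unfolding Bconst_def by (simp add: sum_distrib_left)
  finally have "card (H ms s e) \<le> (e - s) div meas ms 1 + Bconst ms" by simp
  thus ?thesis using Bex by simp
qed
end
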